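(* Let $\nu:[0,1] \to \mathbb{R}$ be continuous with $\nu(x) > 0$ for all $x\in[0,1]$. Let $f:[0,1] \to \mathbb{R}$ be differentiable with $f(0) = 0$. Then $$\int_{0}^{1}|f(x)|\,\nu(x)\, dx \leq \left(\max_{0 \leq x \leq 1}\frac{1}{\nu(x)}\int_{x}^{1}\nu(z)\,dz\right)\int_{0}^{1}|f'(x)|\,\nu(x)\, dx,$$ and the constant is sharp: for the given weight $\nu$, no smaller constant makes this inequality hold for all such $f$. *)

theory Defs
  imports "HOL-Analysis.Analysis"
begin

definition deriv_on_unit :: "(real \<Rightarrow> real) \<Rightarrow> (real \<Rightarrow> real) \<Rightarrow> bool" where
  "deriv_on_unit f f' \<longleftrightarrow> (\<forall>x\<in>{0..1}. (f has_real_derivative f' x) (at x within {0..1}))"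

definition wL1 :: "(real \<Rightarrow> real) \<Rightarrow> (real \<Rightarrow> real) \<Rightarrow> ennreal" where
  "wL1 \<nu> g = (\<integral>\<^sup>+ x\<in>{0..1}. ennreal (\<bar>g x\<bar> * \<nu> x) \<partial>lborel)"

definition hardy_const :: "(real \<Rightarrow> real) \<Rightarrow> real" where
  "hardy_const \<nu> = (SUP x\<in>{0..1}. (1 / \<nu> x) * integral {x..1} \<nu>)"

end

theory Submission
  imports Defs
begin

lemma deriv_meas:
  assumes d: "deriv_on_unit f f'"
  shows "(\<lambda>t. indicator {0..1} t * f' t) \<in> borel_measurable borel"
proof -
  have dd: "\<And>x. x \<in> {0..1} \<Longrightarrow> (f has_real_derivative f' x) (at x within {0..1})"
    using d unfolding deriv_on_unit_def by blast
  have contf: "continuous_on {0..1} f"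
    using dd continuous_on_eq_continuous_within DERIV_continuous by blast
  define g where "g x = f (max 0 (min 1 x))" for x
  have contg: "continuous_on UNIV g"
    unfolding g_def
    by (rule continuous_on_compose2[OF contf]) (auto intro!: continuous_intros)
  define d where "d n x = indicator {0..<1} x * (real (Suc n) * (g (x + 1/real(Suc n)) - g x))" for n x
  have dm: "d n \<in> borel_measurable borel" for n
    unfolding d_def
    using borel_measurable_continuous_onI[OF contg]
    by measurable
  have lim0: "(\<lambda>n. d n x) \<longlonglongrightarrow> indicator {0..<1} x * f' x" for x
  proof (cases "x \<in> {0..<1}")
    case False
    then show ?thesis by (simp add: d_def)
  next
    case True
    have h0: "(\<lambda>n. 1/real (Suc n)) \<longlonglongrightarrow> 0"
      using LIMSEQ_inverse_real_of_nat by (simp add: inverse_eq_divide)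
    have ev: "eventually (\<lambda>n. 1/real (Suc n) < 1 - x) sequentially"
      using order_tendstoD(2)[OF h0, of "1 - x"] True by simp
    have fl: "filterlim (\<lambda>n. x + 1/real(Suc n)) (at x within {0..1}) sequentially"
      unfolding filterlim_at
    proof
      show "((\<lambda>n. x + 1/real(Suc n)) \<longlongrightarrow> x) sequentially"
        using tendsto_add[OF tendsto_const h0] by simp
      show "\<forall>\<^sub>F n in sequentially. x + 1/real(Suc n) \<in> {0..1} \<and> x + 1/real(Suc n) \<noteq> x"
        using ev by (rule eventually_mono) (use True in auto)
    qed
    have "((\<lambda>y. (f y - f x)/(y - x)) \<longlongrightarrow> f' x) (at x within {0..1})"
      using dd[of x] True has_field_derivative_iff by auto
    from filterlim_compose[OF this fl]
    have l1: "(\<lambda>n. (f (x + 1/real(Suc n)) - f x)/(x + 1/real(Suc n) - x)) \<longlonglongrightarrow> f' x" .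
    have "eventually (\<lambda>n. (f (x + 1/real(Suc n)) - f x)/(x + 1/real(Suc n) - x) = d n x) sequentially"
      using ev
    proof eventually_elim
      case (elim n)
      then show ?case using True
        by (simp add: d_def g_def max_def min_def)
    qed
    from Lim_transform_eventually[OF l1 this] True show ?thesis by simp
  qed
  have m0: "(\<lambda>t. indicator {0..<1} t * f' t) \<in> borel_measurable borel"
    by (rule borel_measurable_LIMSEQ_real[OF lim0 dm])
  have eq: "(\<lambda>t. indicator {0..1} t * f' t) = (\<lambda>t. if t = 1 then f' 1 else indicator {0..<1} t * f' t)"
    by (rule ext) (auto simp: indicator_def)
  show ?thesis unfolding eq using m0 by measurable
qed

lemma abs_bound:
  assumes d: "deriv_on_unit f f'" and f0: "f 0 = 0" and x: "x \<in> {0..1}"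
  shows "ennreal \<bar>f x\<bar> \<le> (\<integral>\<^sup>+t. ennreal (indicator {0..x} t * \<bar>f' t\<bar>) \<partial>lborel)"
proof -
  have dd: "\<And>x. x \<in> {0..1} \<Longrightarrow> (f has_real_derivative f' x) (at x within {0..1})"
    using d unfolding deriv_on_unit_def by blast
  have Pm: "(\<lambda>t. indicator {0..1} t * f' t) \<in> borel_measurable borel"
    by (rule deriv_meas[OF d])
  define F where "F t = indicator {0..x} t * \<bar>f' t\<bar>" for t
  have Feq: "F = (\<lambda>t. indicator {0..x} t * \<bar>indicator {0..1} t * f' t\<bar>)"
    using x by (auto simp: F_def indicator_def fun_eq_iff)
  have Fm: "F \<in> borel_measurable borel"
    unfolding Feq using Pm by measurable
  have Fm': "F \<in> borel_measurable lborel" using Fm by simp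
  show ?thesis
  proof (cases "(\<integral>\<^sup>+t. ennreal (F t) \<partial>lborel) = \<infinity>")
    case True
    then show ?thesis by (simp add: F_def)
  next
    case False
    then obtain r where r: "(\<integral>\<^sup>+t. ennreal (F t) \<partial>lborel) = ennreal r"
      using less_top ennreal_cases by (metis ennreal_less_top infinity_ennreal_def)
    have Fnn: "\<And>t. 0 \<le> F t" by (simp add: F_def)
    have int: "integrable lborel F"
      by (rule integrableI_nn_integral_finite[OF Fm' _ r]) (simp add: Fnn)
    have hi: "(F has_integral integral\<^sup>L lborel F) UNIV"
      by (rule has_integral_integral_lborel[OF int])
    have J: "(\<integral>\<^sup>+t. ennreal (F t) \<partial>lborel) = ennreal (integral\<^sup>L lborel F)"
      by (rule nn_integral_eq_integral[OF int]) (simp add: Fnn)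
    have Fif: "F = (\<lambda>t. if t \<in> {0..x} then \<bar>f' t\<bar> else 0)"
      by (auto simp: F_def fun_eq_iff)
    have hia: "((\<lambda>t. \<bar>f' t\<bar>) has_integral integral\<^sup>L lborel F) {0..x}"
      using hi unfolding Fif has_integral_restrict_UNIV .
    have ftc: "(f' has_integral (f x - f 0)) {0..x}"
    proof (rule fundamental_theorem_of_calculus)
      show "0 \<le> x" using x by simp
      fix y assume y: "y \<in> {0..x}"
        then have "y \<in> {0..1}" using x by auto
        then have "(f has_vector_derivative f' y) (at y within {0..1})"
          using dd has_real_derivative_iff_has_vector_derivative by blast
        then show "(f has_vector_derivative f' y) (at y within {0..x})"
          by (rule has_vector_derivative_within_subset) (use x in auto)
    qed
    have "norm (integral {0..x} f') \<le> integral {0..x} (\<lambda>t. \<bar>f' t\<bar>)"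
      by (rule integral_norm_bound_integral) (use ftc hia in auto)
    then have "\<bar>f x\<bar> \<le> integral\<^sup>L lborel F"
      using integral_unique[OF ftc] integral_unique[OF hia] f0 by simp
    then show ?thesis
      using J by (simp add: F_def[symmetric] ennreal_leI)
  qed
qed

lemma N_cont:
  assumes cont: "continuous_on {0..1} (\<nu>::real\<Rightarrow>real)"
  shows "continuous_on {0..1} (\<lambda>x. integral {x..1} \<nu>)"
  by (rule indefinite_integral_continuous_1'[OF integrable_continuous_interval[OF cont]])

lemma hardy_facts:
  fixes \<nu> :: "real \<Rightarrow> real"
  assumes cont: "continuous_on {0..1} \<nu>"
    and pos: "\<And>x. x \<in> {0..1} \<Longrightarrow> \<nu> x > 0"
  shows "\<And>x. x \<in> {0..1} \<Longrightarrow> (1 / \<nu> x) * integral {x..1} \<nu> \<le> hardy_const \<nu>"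
    and "\<exists>x0\<in>{0..1}. hardy_const \<nu> = (1 / \<nu> x0) * integral {x0..1} \<nu>"
proof -
  define R where "R x = (1 / \<nu> x) * integral {x..1} \<nu>" for x
  have contR: "continuous_on {0..1} R"
    unfolding R_def
    by (intro continuous_intros N_cont[OF cont] cont) (use pos in force)
  have cpt: "compact (R ` {0..1})"
    by (rule compact_continuous_image[OF contR]) simp
  have bdd: "bdd_above (R ` {0..1})"
    using cpt by (simp add: bounded_imp_bdd_above compact_imp_bounded)
  show "\<And>x. x \<in> {0..1} \<Longrightarrow> (1 / \<nu> x) * integral {x..1} \<nu> \<le> hardy_const \<nu>"
    unfolding hardy_const_def R_def[symmetric]
    by (rule cSUP_upper[OF _ bdd])
  obtain x0 where x0: "x0 \<in> {0..1}" "\<And>y. y \<in> {0..1} \<Longrightarrow> R y \<le> R x0"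
    using continuous_attains_sup[OF compact_Icc _ contR] by auto
  have "hardy_const \<nu> = R x0"
    unfolding hardy_const_def R_def[symmetric]
    by (rule cSup_eq_maximum) (use x0 in auto)
  then show "\<exists>x0\<in>{0..1}. hardy_const \<nu> = (1 / \<nu> x0) * integral {x0..1} \<nu>"
    using x0 R_def by auto
qed

lemma N_lower:
  fixes \<nu> :: "real \<Rightarrow> real"
  assumes cont: "continuous_on {0..1} \<nu>"
    and pos: "\<And>x. x \<in> {0..1} \<Longrightarrow> \<nu> x > 0"
  obtains m where "m > 0" "\<And>x. x \<in> {0..1} \<Longrightarrow> m \<le> \<nu> x"
    "\<And>t. t \<in> {0..1} \<Longrightarrow> m * (1 - t) \<le> integral {t..1} \<nu>"
proof -
  obtain x1 where x1: "x1 \<in> {0..1}" "\<And>y. y \<in> {0..1} \<Longrightarrow> \<nu> x1 \<le> \<nu> y"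
    using continuous_attains_inf[OF compact_Icc _ cont] by auto
  define m where "m = \<nu> x1"
  have m0: "m > 0" using pos x1 m_def by auto
  have "m * (1 - t) \<le> integral {t..1} \<nu>" if t: "t \<in> {0..1}" for t
  proof -
    have ci: "continuous_on {t..1} \<nu>"
      by (rule continuous_on_subset[OF cont]) (use t in auto)
    have "integral {t..1} (\<lambda>_. m) \<le> integral {t..1} \<nu>"
      by (rule integral_le) (use integrable_continuous_interval[OF ci] x1 t m_def in auto)
    then show ?thesis using t by (simp add: mult.commute)
  qed
  then show ?thesis using that m0 x1 m_def by auto
qed

lemma part1:
  fixes \<nu> :: "real \<Rightarrow> real"
  assumes cont: "continuous_on {0..1} \<nu>"
    and pos: "\<And>x. x \<in> {0..1} \<Longrightarrow> \<nu> x > 0"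
    and f0: "f 0 = 0" and d: "deriv_on_unit f f'"
  shows "wL1 \<nu> f \<le> ennreal (hardy_const \<nu>) * wL1 \<nu> f'"
proof -
  define H where "H = hardy_const \<nu>"
  define p where "p t = indicator {0..1} t * \<bar>f' t\<bar>" for t
  define q where "q x = indicator {0..1} x * \<nu> x" for x
  define N where "N t = integral {t..1} \<nu>" for t
  have pm: "p \<in> borel_measurable borel"
  proof -
    have eq: "p = (\<lambda>t. \<bar>indicator {0..1} t * f' t\<bar>)"
      by (auto simp: p_def fun_eq_iff indicator_def)
    show ?thesis unfolding eq using deriv_meas[OF d] by measurable
  qed
  have qm: "q \<in> borel_measurable borel"
    using borel_measurable_continuous_on_indicator[OF _ cont] by (simp add: q_def[abs_def])
  have pnn: "0 \<le> p t" for t by (simp add: p_def)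
  have qnn: "0 \<le> q t" for t using pos[of t] by (auto simp: q_def indicator_def less_imp_le)
  have Hb: "\<And>x. x \<in> {0..1} \<Longrightarrow> N x \<le> H * \<nu> x"
  proof -
    fix x :: real assume x: "x \<in> {0..1}"
    have "(1 / \<nu> x) * N x \<le> H" using hardy_facts(1)[OF cont pos x] by (simp add: N_def H_def)
    then show "N x \<le> H * \<nu> x" using pos[OF x] by (simp add: field_simps)
  qed
  obtain m where m: "m > 0" "\<And>x. x \<in> {0..1} \<Longrightarrow> m \<le> \<nu> x"
    "\<And>t. t \<in> {0..1} \<Longrightarrow> m * (1 - t) \<le> integral {t..1} \<nu>"
    using N_lower[OF cont pos] by blast
  have H0: "0 \<le> H"
  proof -
    have "0 \<le> N 0" using m(1) m(3)[of 0] by (simp add: N_def)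
    then have "0 \<le> (1 / \<nu> 0) * N 0" using pos[of 0] by simp
    then show ?thesis using hardy_facts(1)[OF cont pos, of 0] by (simp add: N_def H_def)
  qed
  define G where "G x t = ennreal (q x * (if 0 \<le> t \<and> t \<le> x then 1 else 0) * p t)" for x t
  have s1: "wL1 \<nu> f \<le> (\<integral>\<^sup>+x. ennreal (q x) * (\<integral>\<^sup>+t. ennreal (indicator {0..x} t * \<bar>f' t\<bar>) \<partial>lborel) \<partial>lborel)"
    unfolding wL1_def
  proof (rule nn_integral_mono)
    fix x :: real
    show "ennreal (\<bar>f x\<bar> * \<nu> x) * indicator {0..1} x
          \<le> ennreal (q x) * (\<integral>\<^sup>+t. ennreal (indicator {0..x} t * \<bar>f' t\<bar>) \<partial>lborel)"
    proof (cases "x \<in> {0..1}")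
      case True
      have "ennreal (\<bar>f x\<bar> * \<nu> x) = ennreal (q x) * ennreal \<bar>f x\<bar>"
        using True pos[OF True] by (simp add: q_def ennreal_mult' mult.commute)
      also have "\<dots> \<le> ennreal (q x) * (\<integral>\<^sup>+t. ennreal (indicator {0..x} t * \<bar>f' t\<bar>) \<partial>lborel)"
        by (rule mult_left_mono[OF abs_bound[OF d f0 True]]) simp
      finally show ?thesis using True by simp
    next
      case False
      then show ?thesis by simp
    qed
  qed
  have s2: "ennreal (q x) * (\<integral>\<^sup>+t. ennreal (indicator {0..x} t * \<bar>f' t\<bar>) \<partial>lborel)
       = (\<integral>\<^sup>+t. G x t \<partial>lborel)" for x
  proof (cases "x \<in> {0..1}")
    case False
    then show ?thesis by (simp add: q_def G_def)
  next
    case True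
    have "(\<integral>\<^sup>+t. ennreal (indicator {0..x} t * \<bar>f' t\<bar>) \<partial>lborel)
        = (\<integral>\<^sup>+t. ennreal (indicator {0..x} t * p t) \<partial>lborel)"
      by (rule nn_integral_cong) (use True in \<open>auto simp: p_def indicator_def\<close>)
    moreover have "ennreal (q x) * (\<integral>\<^sup>+t. ennreal (indicator {0..x} t * p t) \<partial>lborel)
        = (\<integral>\<^sup>+t. ennreal (q x) * ennreal (indicator {0..x} t * p t) \<partial>lborel)"
      by (rule nn_integral_cmult[symmetric]) (use pm in measurable)
    moreover have "(\<integral>\<^sup>+t. ennreal (q x) * ennreal (indicator {0..x} t * p t) \<partial>lborel)
        = (\<integral>\<^sup>+t. G x t \<partial>lborel)"
      by (rule nn_integral_cong) (auto simp: G_def ennreal_mult'[symmetric] qnn pnn indicator_def)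
    ultimately show ?thesis by simp
  qed
  have Gm: "(\<lambda>(x, t). G x t) \<in> borel_measurable (lborel \<Otimes>\<^sub>M lborel)"
    unfolding G_def using pm qm by measurable
  have s3: "(\<integral>\<^sup>+x. (\<integral>\<^sup>+t. G x t \<partial>lborel) \<partial>lborel) = (\<integral>\<^sup>+t. (\<integral>\<^sup>+x. G x t \<partial>lborel) \<partial>lborel)"
    using lborel_pair.Fubini'[OF Gm] by simp
  have s4: "(\<integral>\<^sup>+x. G x t \<partial>lborel) = ennreal (p t * N t)" for t
  proof (cases "t \<in> {0..1}")
    case False
    then show ?thesis by (simp add: G_def p_def)
  next
    case True
    have ci: "continuous_on {t..1} \<nu>"
      by (rule continuous_on_subset[OF cont]) (use True in auto)
    have hi: "(\<nu> has_integral N t) {t..1}"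
      unfolding N_def using integrable_continuous_interval[OF ci] by auto
    have "(\<integral>\<^sup>+x. G x t \<partial>lborel) = (\<integral>\<^sup>+x. ennreal (p t) * ennreal (indicator {t..1} x * \<nu> x) \<partial>lborel)"
      by (rule nn_integral_cong) (use True pos in \<open>auto simp: G_def q_def indicator_def ennreal_mult'[symmetric] pnn mult.commute\<close>)
    also have "\<dots> = ennreal (p t) * (\<integral>\<^sup>+x. ennreal (indicator {t..1} x * \<nu> x) \<partial>lborel)"
      by (rule nn_integral_cmult) (use borel_measurable_continuous_on_indicator[OF _ ci] in simp)
    also have "(\<integral>\<^sup>+x. ennreal (indicator {t..1} x * \<nu> x) \<partial>lborel) = ennreal (N t)"
      by (rule nn_integral_has_integral_lebesgue[OF _ hi]) (use pos True in \<open>auto intro: less_imp_le\<close>)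
    finally show ?thesis by (simp add: ennreal_mult' pnn)
  qed
  have s5: "(\<integral>\<^sup>+t. ennreal (p t * N t) \<partial>lborel) \<le> (\<integral>\<^sup>+t. ennreal H * ennreal (p t * \<nu> t) \<partial>lborel)"
  proof (rule nn_integral_mono)
    fix t :: real
    show "ennreal (p t * N t) \<le> ennreal H * ennreal (p t * \<nu> t)"
    proof (cases "t \<in> {0..1}")
      case False
      then show ?thesis by (simp add: p_def)
    next
      case True
      have "p t * N t \<le> p t * (H * \<nu> t)"
        by (rule mult_left_mono[OF Hb[OF True] pnn])
      then show ?thesis using H0 by (simp add: ennreal_mult'[symmetric] ennreal_leI mult.assoc mult.left_commute)
    qed
  qed
  have s6: "(\<integral>\<^sup>+t. ennreal H * ennreal (p t * \<nu> t) \<partial>lborel) = ennreal H * (\<integral>\<^sup>+t. ennreal (p t * \<nu> t) \<partial>lborel)"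
  proof -
    have "(\<lambda>t. p t * \<nu> t) = (\<lambda>t. p t * q t)"
      by (auto simp: p_def q_def indicator_def fun_eq_iff)
    then have "(\<lambda>t. p t * \<nu> t) \<in> borel_measurable borel" using pm qm by simp
    then show ?thesis by (intro nn_integral_cmult) simp
  qed
  have s7: "(\<integral>\<^sup>+t. ennreal (p t * \<nu> t) \<partial>lborel) = wL1 \<nu> f'"
    unfolding wL1_def
    by (rule nn_integral_cong) (auto simp: p_def indicator_def)
  have "wL1 \<nu> f \<le> (\<integral>\<^sup>+x. (\<integral>\<^sup>+t. G x t \<partial>lborel) \<partial>lborel)"
    using s1 s2 by simp
  also have "\<dots> = (\<integral>\<^sup>+t. ennreal (p t * N t) \<partial>lborel)"
    using s3 s4 by simp
  also have "\<dots> \<le> ennreal H * wL1 \<nu> f'"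
    using s5 s6 s7 by simp
  finally show ?thesis by (simp add: H_def)
qed

lemma part2_pos:
  fixes \<nu> :: "real \<Rightarrow> real"
  assumes cont: "continuous_on {0..1} \<nu>"
    and pos: "\<And>x. x \<in> {0..1} \<Longrightarrow> \<nu> x > 0"
    and C0: "C > 0" and CH: "C < hardy_const \<nu>"
  shows "\<exists>f f'. f 0 = 0 \<and> deriv_on_unit f f' \<and> \<not> (wL1 \<nu> f \<le> ennreal C * wL1 \<nu> f')"
proof -
  define N where "N t = integral {t..1} \<nu>" for t
  obtain x0 where x0: "x0 \<in> {0..1}" "hardy_const \<nu> = (1 / \<nu> x0) * N x0"
    using hardy_facts(2)[OF cont pos] N_def by auto
  define \<nu>0 where "\<nu>0 = \<nu> x0"
  define N0 where "N0 = N x0"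
  have nu0: "\<nu>0 > 0" using pos x0 \<nu>0_def by auto
  have CN: "C * \<nu>0 < N0"
    using CH x0(2) nu0 by (simp add: \<nu>0_def N0_def field_simps)
  have x01: "x0 < 1"
  proof (rule ccontr)
    assume "\<not> x0 < 1"
    then have "x0 = 1" using x0 by auto
    then have "N0 = 0" by (simp add: N0_def N_def)
    moreover have "C * \<nu>0 > 0" using C0 nu0 by simp
    ultimately show False using CN by linarith
  qed
  define \<eta> where "\<eta> = (N0 - C * \<nu>0) / (2 * (C + 1))"
  have eta0: "\<eta> > 0" using CN C0 by (simp add: \<eta>_def)
  have key: "C * (\<nu>0 + \<eta>) < N0 - \<eta>"
  proof -
    have "\<eta> * (C + 1) = (N0 - C * \<nu>0) / 2" using C0 by (simp add: \<eta>_def field_simps)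
    then show ?thesis using CN by (simp add: algebra_simps)
  qed
  obtain \<delta>1 where d1: "\<delta>1 > 0" "\<And>y. y \<in> {0..1} \<Longrightarrow> dist y x0 < \<delta>1 \<Longrightarrow> dist (\<nu> y) \<nu>0 < \<eta>"
    using cont x0(1) eta0 unfolding continuous_on_iff \<nu>0_def by blast
  obtain \<delta>2 where d2: "\<delta>2 > 0" "\<And>y. y \<in> {0..1} \<Longrightarrow> dist y x0 < \<delta>2 \<Longrightarrow> dist (N y) N0 < \<eta>"
    using N_cont[OF cont] x0(1) eta0 unfolding continuous_on_iff N0_def N_def by blast
  define \<epsilon> where "\<epsilon> = min (min \<delta>1 \<delta>2 / 3) ((1 - x0) / 3)"
  have e0: "\<epsilon> > 0" using d1 d2 x01 by (simp add: \<epsilon>_def)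
  have e1: "3 * \<epsilon> \<le> min \<delta>1 \<delta>2" "3 * \<epsilon> \<le> 1 - x0" unfolding \<epsilon>_def by (auto simp: min_def)
  define b where "b = x0 + 2 * \<epsilon>"
  have b1: "b \<in> {0..1}" "b < 1" using e0 e1 x0 by (auto simp: b_def)
  define h where "h t = max 0 (\<epsilon> - \<bar>t - (x0 + \<epsilon>)\<bar>)" for t
  have hnn: "0 \<le> h t" for t by (simp add: h_def)
  have hc: "continuous_on S h" for S unfolding h_def[abs_def] by (intro continuous_intros)
  have hint: "h integrable_on {u..v}" for u v by (rule integrable_continuous_interval[OF hc])
  have hzero: "h t = 0" if "t \<ge> b" for t using that by (simp add: h_def b_def)
  define f where "f x = integral {0..x} h" for x
  have f0: "f 0 = 0" by (simp add: f_def)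
  have fd: "deriv_on_unit f h"
    unfolding deriv_on_unit_def f_def[abs_def]
    using integral_has_real_derivative[OF hc] by blast
  define I where "I = integral {0..1} h"
  have fI: "f x = I" if "x \<in> {b..1}" for x
  proof -
    have A: "f x = integral {0..b} h + integral {b..x} h"
      unfolding f_def using Henstock_Kurzweil_Integration.integral_combine[where a=0 and c=b and b=x and f=h] that b1 hint by auto
    have B: "I = integral {0..b} h + integral {b..1} h"
      unfolding I_def using Henstock_Kurzweil_Integration.integral_combine[where a=0 and c=b and b=1 and f=h] that b1 hint by auto
    have Z: "integral {b..y} h = 0" for y
      by (subst integral_cong[where g="\<lambda>_. 0"]) (auto simp: hzero)
    show ?thesis using A B Z by simp
  qed
  have I0: "I > 0"
  proof -
    have "integral {x0 + \<epsilon>/2..x0 + 3*\<epsilon>/2} (\<lambda>_. \<epsilon>/2) \<le> integral {x0 + \<epsilon>/2..x0 + 3*\<epsilon>/2} h"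
      by (rule integral_le) (auto simp: hint h_def split: abs_split)
    also have "\<dots> \<le> I"
      unfolding I_def
      by (rule integral_subset_le) (use e0 e1 x0 hint hnn in auto)
    finally have "\<epsilon> * (\<epsilon> / 2) \<le> I" using e0 by simp
    moreover have "\<epsilon> * (\<epsilon> / 2) > 0" using e0 by simp
    ultimately show ?thesis by linarith
  qed
  have up: "wL1 \<nu> h \<le> ennreal ((\<nu>0 + \<eta>) * I)"
  proof -
    have hi: "((\<lambda>t. (\<nu>0 + \<eta>) * h t) has_integral (\<nu>0 + \<eta>) * I) {0..1}"
      unfolding I_def by (intro has_integral_mult_right integrable_integral hint)
    have "wL1 \<nu> h \<le> (\<integral>\<^sup>+t. ennreal (indicator {0..1} t * ((\<nu>0 + \<eta>) * h t)) \<partial>lborel)"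
      unfolding wL1_def
    proof (rule nn_integral_mono)
      fix t :: real
      show "ennreal (\<bar>h t\<bar> * \<nu> t) * indicator {0..1} t \<le> ennreal (indicator {0..1} t * ((\<nu>0 + \<eta>) * h t))"
      proof (cases "t \<in> {0..1} \<and> h t > 0")
        case True
        then have "\<bar>t - (x0 + \<epsilon>)\<bar> < \<epsilon>" by (auto simp: h_def max_def split: if_splits)
        then have "dist t x0 < \<delta>1" using e0 e1 by (auto simp: dist_real_def abs_less_iff)
        then have "\<nu> t < \<nu>0 + \<eta>" using d1(2)[of t] True by (simp add: dist_real_def)
        then have "h t * \<nu> t \<le> (\<nu>0 + \<eta>) * h t" using True by (simp add: mult.commute)
        then show ?thesis using True hnn[of t] by (simp add: ennreal_leI)
      next
        case False
        then have "t \<notin> {0..1} \<or> h t = 0" using hnn[of t] by auto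
        then show ?thesis by auto
      qed
    qed
    also have "\<dots> = ennreal ((\<nu>0 + \<eta>) * I)"
      by (rule nn_integral_has_integral_lebesgue[OF _ hi]) (use nu0 eta0 hnn in simp)
    finally show ?thesis .
  qed
  have low: "ennreal (N b * I) \<le> wL1 \<nu> f"
  proof -
    have ci: "continuous_on {b..1} \<nu>"
      by (rule continuous_on_subset[OF cont]) (use b1 in auto)
    have hi: "((\<lambda>x. \<nu> x * I) has_integral N b * I) {b..1}"
      unfolding N_def by (intro has_integral_mult_left integrable_integral integrable_continuous_interval[OF ci])
    have "ennreal (N b * I) = (\<integral>\<^sup>+x. ennreal (indicator {b..1} x * (\<nu> x * I)) \<partial>lborel)"
      by (rule nn_integral_has_integral_lebesgue[OF _ hi, symmetric])
         (use pos b1 I0 in \<open>auto intro!: mult_nonneg_nonneg less_imp_le\<close>)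
    also have "\<dots> \<le> wL1 \<nu> f"
      unfolding wL1_def
    proof (rule nn_integral_mono)
      fix x :: real
      show "ennreal (indicator {b..1} x * (\<nu> x * I)) \<le> ennreal (\<bar>f x\<bar> * \<nu> x) * indicator {0..1} x"
      proof (cases "x \<in> {b..1}")
        case True
        then have "x \<in> {0..1}" using b1 by auto
        then show ?thesis using True fI[OF True] I0 by (simp add: mult.commute)
      next
        case False
        then show ?thesis by simp
      qed
    qed
    finally show ?thesis .
  qed
  have Nb: "N b > N0 - \<eta>"
  proof -
    have "dist b x0 < \<delta>2" using e0 e1 by (simp add: b_def dist_real_def)
    then have "dist (N b) N0 < \<eta>" using d2(2) b1 by blast
    then show ?thesis by (simp add: dist_real_def)
  qed
  have "ennreal C * wL1 \<nu> h \<le> ennreal C * ennreal ((\<nu>0 + \<eta>) * I)"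
    by (rule mult_left_mono[OF up]) simp
  also have "\<dots> = ennreal (C * (\<nu>0 + \<eta>) * I)"
    using C0 by (simp add: ennreal_mult' mult.assoc)
  also have "\<dots> < ennreal (N b * I)"
  proof (rule ennreal_lessI)
    have "C * (\<nu>0 + \<eta>) < N b" using key Nb by linarith
    then show "C * (\<nu>0 + \<eta>) * I < N b * I" using I0 by simp
    then show "0 < N b * I"
      using C0 nu0 eta0 I0 by (smt (verit) mult_pos_pos)
  qed
  also have "\<dots> \<le> wL1 \<nu> f" by (rule low)
  finally have "\<not> (wL1 \<nu> f \<le> ennreal C * wL1 \<nu> h)" by (simp add: not_le)
  then show ?thesis using f0 fd by blast
qed

theorem theorem5:
  fixes \<nu> :: "real \<Rightarrow> real"
  assumes cont: "continuous_on {0..1} \<nu>"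
    and pos: "\<And>x. x \<in> {0..1} \<Longrightarrow> \<nu> x > 0"
  shows "(\<forall>f f'. f 0 = 0 \<and> deriv_on_unit f f' \<longrightarrow>
            wL1 \<nu> f \<le> ennreal (hardy_const \<nu>) * wL1 \<nu> f')
       \<and> (\<forall>C < hardy_const \<nu>. \<exists>f f'. f 0 = 0 \<and> deriv_on_unit f f' \<and>
            \<not> (wL1 \<nu> f \<le> ennreal C * wL1 \<nu> f'))"
proof (intro conjI allI impI)
  fix f f' :: "real \<Rightarrow> real"
  assume "f 0 = 0 \<and> deriv_on_unit f f'"
  then show "wL1 \<nu> f \<le> ennreal (hardy_const \<nu>) * wL1 \<nu> f'"
    using part1[OF cont pos] by blast
next
  fix C :: real
  assume CH: "C < hardy_const \<nu>"
  obtain m where m: "m > 0" "\<And>x. x \<in> {0..1} \<Longrightarrow> m \<le> \<nu> x"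
    "\<And>t. t \<in> {0..1} \<Longrightarrow> m * (1 - t) \<le> integral {t..1} \<nu>"
    using N_lower[OF cont pos] by blast
  have H0: "0 < hardy_const \<nu>"
  proof -
    have "0 < integral {0..1} \<nu>" using m(1) m(3)[of 0] by simp
    then have "0 < (1 / \<nu> 0) * integral {0..1} \<nu>" using pos[of 0] by simp
    then show ?thesis using hardy_facts(1)[OF cont pos, of 0] by simp
  qed
  show "\<exists>f f'. f 0 = 0 \<and> deriv_on_unit f f' \<and> \<not> (wL1 \<nu> f \<le> ennreal C * wL1 \<nu> f')"
  proof (cases "C > 0")
    case True
    then show ?thesis using part2_pos[OF cont pos True CH] by blast
  next
    case False
    obtain f f' where ff: "f 0 = 0" "deriv_on_unit f f'"
      "\<not> (wL1 \<nu> f \<le> ennreal (hardy_const \<nu> / 2) * wL1 \<nu> f')"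
      using part2_pos[OF cont pos, of "hardy_const \<nu> / 2"] H0 by auto
    have "ennreal C = 0" using False by (simp add: ennreal_neg)
    moreover have "wL1 \<nu> f \<noteq> 0" using ff(3) by (metis zero_le)
    ultimately have "\<not> (wL1 \<nu> f \<le> ennreal C * wL1 \<nu> f')" by simp
    then show ?thesis using ff by blast
  qed
qed

end
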